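(* Let $G$ be a locally compact group, $K$ a compact subgroup with normalized Haar measure $dk$, and $\mu:G\to\mathbb{C}\setminus\{0\}$ a continuous character. Let $f\in\mathcal{C}(G)$, $f\neq0$, satisfy $$\int_K f(xkyk^{-1})\,dk+\mu(y)\int_K f(xky^{-1}k^{-1})\,dk=2f(x)f(y)\quad\text{for all } x,y\in G.$$ Then: (i) $f(e)=1$; (ii) $f$ is $K$-central; (iii) $f(x)=\mu(x)f(x^{-1})$ for all $x\in G$; (iv) $\int_K f(xkyk^{-1})\,dk=\int_K f(ykxk^{-1})\,dk$ for all $x,y\in G$; (v) for every $x\in G$, the function $f_x(y)=\int_Kf(xkyk^{-1})\,dk-f(x)f(y)$ satisfies $$\int_K f_x(ykzk^{-1})\,dk+\int_K f_x(zkyk^{-1})\,dk=2f_x(y)f(z)+2f_x(z)f(y)\quad\text{for all } y,z\in G.$$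
   Context: $\mathcal{C}(G)$ is the space of complex continuous functions on $G$; $e$ is the identity. A function $f$ on $G$ is $K$-central if $f(kx)=f(xk)$ for all $k\in K$, $x\in G$. A character of $G$ is a homomorphism $G\to\mathbb{C}\setminus\{0\}$. *)

theory Defs
  imports "HOL-Probability.Probability" "HOL-Algebra.Group"
begin

definition topological_group :: "('a, 'b) monoid_scheme \<Rightarrow> 'a topology \<Rightarrow> bool" where
  "topological_group G T \<longleftrightarrow> group G \<and> topspace T = carrier G \<and> Hausdorff_space T
     \<and> continuous_map (prod_topology T T) T (\<lambda>p. fst p \<otimes>\<^bsub>G\<^esub> snd p)
     \<and> continuous_map T T (\<lambda>x. inv\<^bsub>G\<^esub> x)"

definition locally_compact_group :: "('a, 'b) monoid_scheme \<Rightarrow> 'a topology \<Rightarrow> bool" where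
  "locally_compact_group G T \<longleftrightarrow> topological_group G T \<and> locally_compact_space T"

definition borel_of_top :: "'a topology \<Rightarrow> 'a measure" where
  "borel_of_top X = sigma (topspace X) {U. openin X U}"

text \<open>Normalized Haar measure on a compact subgroup K of (G,T): a Borel probability
  measure on K (with the subspace topology) that is invariant under left and right
  translations by elements of K and under inversion (all properties enjoyed by the
  normalized Haar measure of a compact group).\<close>
definition normalized_haar :: "('a, 'b) monoid_scheme \<Rightarrow> 'a topology \<Rightarrow> 'a set \<Rightarrow> 'a measure \<Rightarrow> bool" where
  "normalized_haar G T K M \<longleftrightarrow>
     prob_space M \<and> space M = K \<and> sets M = sets (borel_of_top (subtopology T K))
     \<and> (\<forall>k\<in>K. \<forall>A\<in>sets M. (\<lambda>x. k \<otimes>\<^bsub>G\<^esub> x) ` A \<in> sets M \<and> emeasure M ((\<lambda>x. k \<otimes>\<^bsub>G\<^esub> x) ` A) = emeasure M A)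
     \<and> (\<forall>k\<in>K. \<forall>A\<in>sets M. (\<lambda>x. x \<otimes>\<^bsub>G\<^esub> k) ` A \<in> sets M \<and> emeasure M ((\<lambda>x. x \<otimes>\<^bsub>G\<^esub> k) ` A) = emeasure M A)
     \<and> (\<forall>A\<in>sets M. (\<lambda>x. inv\<^bsub>G\<^esub> x) ` A \<in> sets M \<and> emeasure M ((\<lambda>x. inv\<^bsub>G\<^esub> x) ` A) = emeasure M A)"

definition character :: "('a, 'b) monoid_scheme \<Rightarrow> ('a \<Rightarrow> complex) \<Rightarrow> bool" where
  "character G \<mu> \<longleftrightarrow> (\<forall>x\<in>carrier G. \<mu> x \<noteq> 0)
     \<and> (\<forall>x\<in>carrier G. \<forall>y\<in>carrier G. \<mu> (x \<otimes>\<^bsub>G\<^esub> y) = \<mu> x * \<mu> y)"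

definition K_central :: "('a, 'b) monoid_scheme \<Rightarrow> 'a set \<Rightarrow> ('a \<Rightarrow> complex) \<Rightarrow> bool" where
  "K_central G K f \<longleftrightarrow> (\<forall>k\<in>K. \<forall>x\<in>carrier G. f (k \<otimes>\<^bsub>G\<^esub> x) = f (x \<otimes>\<^bsub>G\<^esub> k))"

end

theory Submission imports Defs begin

locale HS = group G for G :: "('a, 'b) monoid_scheme" (structure) +
  fixes T :: "'a topology" and K :: "'a set" and M :: "'a measure"
  assumes top: "topspace T = carrier G"
    and mulc: "continuous_map (prod_topology T T) T (\<lambda>p. fst p \<otimes>\<^bsub>G\<^esub> snd p)"
    and invc: "continuous_map T T (\<lambda>x. inv\<^bsub>G\<^esub> x)"
    and sub: "subgroup K G" and cpt: "compactin T K" and haar: "normalized_haar G T K M"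
begin

abbreviation "X \<equiv> subtopology T K"

lemma KG: "K \<subseteq> carrier G" using sub subgroup.subset by blast
lemma inK: "x \<in> K \<Longrightarrow> x \<in> carrier G" using KG by blast
lemma topX: "topspace X = K" using KG top by auto
lemma prob: "prob_space M" using haar unfolding normalized_haar_def by (elim conjE)
lemma spM: "space M = K" using haar unfolding normalized_haar_def by (elim conjE)
lemma setsM: "sets M = sigma_sets K {U. openin X U}"
proof -
  have "sets M = sets (borel_of_top X)" using haar unfolding normalized_haar_def by (elim conjE)
  also have "\<dots> = sigma_sets (topspace X) {U. openin X U}"
    unfolding borel_of_top_def by (rule sets_measure_of) (use openin_subset in blast)
  finally show ?thesis using topX by simp
qed

lemma open_sets: "openin X U \<Longrightarrow> U \<in> sets M"
  using setsM by auto

lemma cont_meas: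
  assumes "continuous_map X euclidean (g :: 'a \<Rightarrow> 'c::topological_space)"
  shows "g \<in> borel_measurable M"
proof (rule borel_measurableI)
  fix S :: "'c set" assume "open S"
  then have "openin X {x \<in> topspace X. g x \<in> S}"
    using assms by (simp add: continuous_map_def)
  moreover have "g -` S \<inter> space M = {x \<in> topspace X. g x \<in> S}" using topX spM by auto
  ultimately show "g -` S \<inter> space M \<in> sets M" using open_sets by simp
qed

lemma cpX: "compact_space X" using compact_space_subtopology[OF cpt] .

lemma cont_bounded:
  assumes "continuous_map X euclidean (g :: 'a \<Rightarrow> 'c::metric_space)"
  shows "bounded (g ` K)"
proof -
  have "compactin euclidean (g ` topspace X)"
    using image_compactin[OF _ assms] cpX by (simp add: compact_space_def)
  then show ?thesis using topX by (simp add: compact_imp_bounded)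
qed

lemma cont_int:
  assumes "continuous_map X euclidean (g :: 'a \<Rightarrow> complex)"
  shows "integrable M g"
proof -
  interpret prob_space M by (rule prob)
  obtain B where B: "\<forall>x\<in>K. norm (g x) \<le> B"
    using cont_bounded[OF assms] by (auto simp: bounded_iff)
  show ?thesis
    by (rule integrable_const_bound[where B=B]) (use B spM cont_meas[OF assms] in auto)
qed

lemma haar_R: "\<forall>k\<in>K. \<forall>A\<in>sets M. (\<lambda>x. x \<otimes> k) ` A \<in> sets M \<and> emeasure M ((\<lambda>x. x \<otimes> k) ` A) = emeasure M A"
  using haar unfolding normalized_haar_def by (elim conjE)
lemma haar_L: "\<forall>k\<in>K. \<forall>A\<in>sets M. (\<lambda>x. k \<otimes> x) ` A \<in> sets M \<and> emeasure M ((\<lambda>x. k \<otimes> x) ` A) = emeasure M A"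
  using haar unfolding normalized_haar_def by (elim conjE)
lemma haar_I: "\<forall>A\<in>sets M. (\<lambda>x. inv x) ` A \<in> sets M \<and> emeasure M ((\<lambda>x. inv x) ` A) = emeasure M A"
  using haar unfolding normalized_haar_def by (elim conjE)

lemma cm_mult: "continuous_map Y T a \<Longrightarrow> continuous_map Y T b \<Longrightarrow> continuous_map Y T (\<lambda>x. a x \<otimes>\<^bsub>G\<^esub> b x)"
  using continuous_map_compose[OF continuous_map_pairedI[of Y T a T b] mulc] by (simp add: o_def)
lemma cm_inv: "continuous_map Y T a \<Longrightarrow> continuous_map Y T (\<lambda>x. inv\<^bsub>G\<^esub> (a x))"
  using continuous_map_compose[OF _ invc] by (simp add: o_def)
lemma cm_const: "c \<in> carrier G \<Longrightarrow> continuous_map Y T (\<lambda>x. c)"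
  using top by simp
lemma cm_idX: "continuous_map X T (\<lambda>x. x)"
  by (simp add: continuous_map_from_subtopology)
lemma cm_fst: "continuous_map (prod_topology X X) T fst"
  using continuous_map_compose[OF continuous_map_fst cm_idX] by (simp add: o_def)
lemma cm_snd: "continuous_map (prod_topology X X) T snd"
  using continuous_map_compose[OF continuous_map_snd cm_idX] by (simp add: o_def)
lemma cm_f: "continuous_map T euclidean f \<Longrightarrow> continuous_map Y T a \<Longrightarrow> continuous_map Y euclidean (\<lambda>x. f (a x))"
  using continuous_map_compose[of Y T a euclidean f] by (simp add: o_def)

lemmas cm_intros = cm_mult cm_inv cm_const cm_idX cm_fst cm_snd

lemma haar_meas:
  assumes "\<And>k. k\<in>K \<Longrightarrow> Tr k \<in> K" "\<And>k. k\<in>K \<Longrightarrow> S k \<in> K"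
    "\<And>k. k\<in>K \<Longrightarrow> Tr (S k) = k" "\<And>k. k\<in>K \<Longrightarrow> S (Tr k) = k"
    "\<And>A. A \<in> sets M \<Longrightarrow> S ` A \<in> sets M \<and> emeasure M (S ` A) = emeasure M A"
  shows "Tr \<in> measurable M M" and "distr M M Tr = M"
proof -
  have pre: "Tr -` A \<inter> space M = S ` A" if "A \<in> sets M" for A
  proof -
    have "A \<subseteq> K" using sets.sets_into_space[OF that] spM by simp
    show ?thesis
    proof (rule equalityI; rule subsetI)
      fix x assume "x \<in> Tr -` A \<inter> space M"
      then have "x = S (Tr x)" "Tr x \<in> A" using assms(4) spM by auto
      then show "x \<in> S ` A" by (metis image_eqI)
    next
      fix x assume "x \<in> S ` A"
      then obtain a where "a \<in> A" "x = S a" by auto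
      then show "x \<in> Tr -` A \<inter> space M" using \<open>A \<subseteq> K\<close> assms(2,3) spM by auto
    qed
  qed
  show meas: "Tr \<in> measurable M M"
    by (rule measurableI) (use assms(1) spM pre assms(5) in auto)
  show "distr M M Tr = M"
    by (rule measure_eqI) (simp_all add: emeasure_distr meas pre assms(5))
qed

lemma haar_int:
  assumes "\<And>k. k\<in>K \<Longrightarrow> Tr k \<in> K" "\<And>k. k\<in>K \<Longrightarrow> S k \<in> K"
    "\<And>k. k\<in>K \<Longrightarrow> Tr (S k) = k" "\<And>k. k\<in>K \<Longrightarrow> S (Tr k) = k"
    "\<And>A. A \<in> sets M \<Longrightarrow> S ` A \<in> sets M \<and> emeasure M (S ` A) = emeasure M A"
    and g: "(g :: 'a \<Rightarrow> complex) \<in> borel_measurable M"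
  shows "(\<integral>k. g (Tr k) \<partial>M) = integral\<^sup>L M g"
  using integral_distr[OF haar_meas(1)[OF assms(1-5)] g] haar_meas(2)[OF assms(1-5)] by simp

lemma int_right:
  assumes k0: "k0 \<in> K" and g: "(g :: 'a \<Rightarrow> complex) \<in> borel_measurable M"
  shows "(\<integral>k. g (k \<otimes>\<^bsub>G\<^esub> k0) \<partial>M) = integral\<^sup>L M g"
proof -
  have ik: "inv k0 \<in> K" by (rule subgroup.m_inv_closed[OF sub k0])
  show ?thesis
  proof (rule haar_int[where Tr="\<lambda>k. k \<otimes> k0" and S="\<lambda>k. k \<otimes> inv k0" and g=g])
    show "k \<otimes> k0 \<in> K" if "k \<in> K" for k by (rule subgroup.m_closed[OF sub that k0])
    show "k \<otimes> inv k0 \<in> K" if "k \<in> K" for k by (rule subgroup.m_closed[OF sub that ik])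
    show "k \<otimes> inv k0 \<otimes> k0 = k" if "k \<in> K" for k using that k0 by (simp add: m_assoc inK)
    show "k \<otimes> k0 \<otimes> inv k0 = k" if "k \<in> K" for k using that k0 by (simp add: m_assoc inK)
    show "\<And>A. A \<in> sets M \<Longrightarrow> (\<lambda>k. k \<otimes> inv k0) ` A \<in> sets M \<and> emeasure M ((\<lambda>k. k \<otimes> inv k0) ` A) = emeasure M A"
      using haar_R ik by simp
  qed (rule g)
qed

lemma int_left:
  assumes k0: "k0 \<in> K" and g: "(g :: 'a \<Rightarrow> complex) \<in> borel_measurable M"
  shows "(\<integral>k. g (k0 \<otimes>\<^bsub>G\<^esub> k) \<partial>M) = integral\<^sup>L M g"
proof -
  have ik: "inv k0 \<in> K" by (rule subgroup.m_inv_closed[OF sub k0])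
  show ?thesis
  proof (rule haar_int[where Tr="\<lambda>k. k0 \<otimes> k" and S="\<lambda>k. inv k0 \<otimes> k" and g=g])
    show "k0 \<otimes> k \<in> K" if "k \<in> K" for k by (rule subgroup.m_closed[OF sub k0 that])
    show "inv k0 \<otimes> k \<in> K" if "k \<in> K" for k by (rule subgroup.m_closed[OF sub ik that])
    show "k0 \<otimes> (inv k0 \<otimes> k) = k" if "k \<in> K" for k using that k0 by (simp add: m_assoc[symmetric] inK)
    show "inv k0 \<otimes> (k0 \<otimes> k) = k" if "k \<in> K" for k using that k0 by (simp add: m_assoc[symmetric] inK)
    show "\<And>A. A \<in> sets M \<Longrightarrow> (\<lambda>k. inv k0 \<otimes> k) ` A \<in> sets M \<and> emeasure M ((\<lambda>k. inv k0 \<otimes> k) ` A) = emeasure M A"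
      using haar_L ik by simp
  qed (rule g)
qed

lemma int_inv:
  assumes g: "(g :: 'a \<Rightarrow> complex) \<in> borel_measurable M"
  shows "(\<integral>k. g (inv\<^bsub>G\<^esub> k) \<partial>M) = integral\<^sup>L M g"
proof -
  show ?thesis
  proof (rule haar_int[where Tr="\<lambda>k. inv k" and S="\<lambda>k. inv k" and g=g])
    show "inv k \<in> K" if "k \<in> K" for k by (rule subgroup.m_inv_closed[OF sub that])
    then show "inv k \<in> K" if "k \<in> K" for k using that by blast
    show "inv (inv k) = k" if "k \<in> K" for k using that KG by (simp add: subsetD)
    then show "inv (inv k) = k" if "k \<in> K" for k using that by blast
    show "\<And>A. A \<in> sets M \<Longrightarrow> (\<lambda>k. inv k) ` A \<in> sets M \<and> emeasure M ((\<lambda>k. inv k) ` A) = emeasure M A"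
      using haar_I by simp
  qed (rule g)
qed

lemma cover:
  assumes "\<And>k. k\<in>K \<Longrightarrow> openin X (V k) \<and> k \<in> V k"
  shows "\<exists>D\<subseteq>K. finite D \<and> K \<subseteq> (\<Union>d\<in>D. V d)"
proof -
  have "\<exists>\<F>. finite \<F> \<and> \<F> \<subseteq> V ` K \<and> topspace X \<subseteq> \<Union>\<F>"
    using cpX unfolding compact_space_alt
    by (rule allE[where x="V ` K"]) (use assms topX in blast)
  then obtain \<F> where F: "finite \<F>" "\<F> \<subseteq> V ` K" "K \<subseteq> \<Union>\<F>" using topX by auto
  obtain D where "D \<subseteq> K" "finite D" "\<F> = V ` D" using finite_subset_image[OF F(1,2)] by blast
  then show ?thesis using F(3) by blast
qed

lemma tube:
  assumes F: "continuous_map (prod_topology X X) euclidean (F :: 'a\<times>'a \<Rightarrow> complex)"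
    and h0: "h0 \<in> K" and e: "e > 0"
  shows "\<exists>U. openin X U \<and> h0 \<in> U \<and> (\<forall>h\<in>U. \<forall>k\<in>K. norm (F (h,k) - F (h0,k)) < e)"
proof -
  define W where "W k = {p \<in> topspace (prod_topology X X). F p \<in> ball (F (h0,k)) (e/2)}" for k
  have Wo: "openin (prod_topology X X) (W k)" for k
    unfolding W_def by (rule openin_continuous_map_preimage[OF F]) simp
  have "\<exists>U V. openin X U \<and> openin X V \<and> h0 \<in> U \<and> k \<in> V \<and> U \<times> V \<subseteq> W k" if "k \<in> K" for k
  proof -
    have "(h0, k) \<in> W k" using h0 that e topX by (simp add: W_def)
    then show ?thesis using Wo[of k] unfolding openin_prod_topology_alt by blast
  qed
  then obtain U V where UV: "\<And>k. k\<in>K \<Longrightarrow> openin X (U k) \<and> openin X (V k) \<and> h0 \<in> U k \<and> k \<in> V k \<and> U k \<times> V k \<subseteq> W k"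
    by metis
  obtain D where D: "D \<subseteq> K" "finite D" "K \<subseteq> (\<Union>d\<in>D. V d)" using cover[of V] UV by blast
  have oK: "openin X K" by (metis openin_topspace topX)
  define U0 where "U0 = \<Inter> (insert K (U ` D))"
  have "openin X U0" unfolding U0_def
    by (rule openin_Inter) (use D UV oK in auto)
  moreover have "h0 \<in> U0" using h0 D UV unfolding U0_def by auto
  moreover have "norm (F (h,k) - F (h0,k)) < e" if h: "h \<in> U0" and k: "k \<in> K" for h k
  proof -
    obtain d where d: "d \<in> D" "k \<in> V d" using D k by blast
    have "h \<in> U d" using h d unfolding U0_def by auto
    then have "(h,k) \<in> W d" "(h0,k) \<in> W d" using UV[of d] d D by auto
    then have "dist (F (h,k)) (F (h0,d)) < e/2" "dist (F (h0,k)) (F (h0,d)) < e/2"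
      by (auto simp: W_def dist_commute)
    moreover have "F (h,k) - F (h0,k) = (F (h,k) - F (h0,d)) - (F (h0,k) - F (h0,d))" by simp
    ultimately show ?thesis
      using norm_triangle_ineq4[of "F (h,k) - F (h0,d)" "F (h0,k) - F (h0,d)"]
      by (simp add: dist_norm)
  qed
  ultimately show ?thesis by blast
qed

lemma approx:
  assumes F: "continuous_map (prod_topology X X) euclidean (F :: 'a\<times>'a \<Rightarrow> complex)" and e: "e > 0"
  shows "\<exists>(m::nat) c A. (\<forall>i<m. c i \<in> K \<and> A i \<in> sets M) \<and>
     (\<forall>h\<in>K. \<forall>k\<in>K. norm (F (h,k) - (\<Sum>i<m. indicator (A i) h * F (c i, k))) < e)"
proof -
  have "\<exists>U. openin X U \<and> h0 \<in> U \<and> (\<forall>h\<in>U. \<forall>k\<in>K. norm (F (h,k) - F (h0,k)) < e)" if "h0 \<in> K" for h0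
    using tube[OF F that e] .
  then obtain U where U: "\<And>h0. h0 \<in> K \<Longrightarrow> openin X (U h0) \<and> h0 \<in> U h0 \<and> (\<forall>h\<in>U h0. \<forall>k\<in>K. norm (F (h,k) - F (h0,k)) < e)"
    by metis
  obtain D where D: "D \<subseteq> K" "finite D" "K \<subseteq> (\<Union>d\<in>D. U d)" using cover[of U] U by blast
  obtain xs where xs: "set xs = D" using finite_list[OF D(2)] by blast
  define m where "m = length xs"
  define c where "c i = xs ! i" for i
  define A where "A i = U (c i) - (\<Union>j<i. U (c j))" for i
  have cK: "c i \<in> K" if "i < m" for i using that D xs unfolding c_def m_def by auto
  have UM: "U (c i) \<in> sets M" if "i < m" for i using U[OF cK[OF that]] open_sets by blast
  have AM: "A i \<in> sets M" if "i < m" for i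
    unfolding A_def using that UM by (intro sets.Diff sets.finite_UN) auto
  have approx: "norm (F (h,k) - (\<Sum>i<m. indicator (A i) h * F (c i, k))) < e" if h: "h \<in> K" and k: "k \<in> K" for h k
  proof -
    have ex: "\<exists>i. i < m \<and> h \<in> U (c i)"
    proof -
      obtain d where "d \<in> D" "h \<in> U d" using D h by blast
      then obtain i where "i < m" "c i = d" using xs unfolding c_def m_def by (metis in_set_conv_nth)
      then show ?thesis using \<open>h \<in> U d\<close> by blast
    qed
    define i0 where "i0 = (LEAST i. i < m \<and> h \<in> U (c i))"
    have i0: "i0 < m" "h \<in> U (c i0)" using LeastI_ex[OF ex] unfolding i0_def by auto
    have lt: "\<not> (h \<in> U (c j))" if "j < i0" for j
      using not_less_Least[of j "\<lambda>i. i < m \<and> h \<in> U (c i)"] that i0 unfolding i0_def by auto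
    have hA: "h \<in> A i0" using i0 lt unfolding A_def by auto
    have nA: "h \<notin> A i" if "i \<noteq> i0" for i
    proof (cases "i < i0")
      case True then show ?thesis using lt unfolding A_def by auto
    next
      case False then have "i0 < i" using that by auto
      then show ?thesis using i0 unfolding A_def by auto
    qed
    have "(\<Sum>i<m. indicator (A i) h * F (c i, k)) = indicator (A i0) h * F (c i0, k) + (\<Sum>i\<in>{..<m} - {i0}. indicator (A i) h * F (c i, k))"
      by (rule sum.remove) (use i0 in auto)
    also have "(\<Sum>i\<in>{..<m} - {i0}. indicator (A i) h * F (c i, k)) = 0"
      by (rule sum.neutral) (use nA in auto)
    finally have "(\<Sum>i<m. indicator (A i) h * F (c i, k)) = F (c i0, k)" using hA by simp
    then show ?thesis using U[OF cK[OF i0(1)]] i0(2) k by simp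
  qed
  have "(\<forall>i<m. c i \<in> K \<and> A i \<in> sets M) \<and>
     (\<forall>h\<in>K. \<forall>k\<in>K. norm (F (h,k) - (\<Sum>i<m. indicator (A i) h * F (c i, k))) < e)"
    using cK AM approx by blast
  then show ?thesis by blast
qed

lemma contX_section:
  assumes F: "continuous_map (prod_topology X X) euclidean F" and c: "c \<in> K"
  shows "continuous_map X euclidean (\<lambda>k. F (c, k))"
proof -
  have "continuous_map X (prod_topology X X) (\<lambda>k. (c,k))"
    by (rule continuous_map_pairedI) (use c topX in auto)
  then show ?thesis using continuous_map_compose[OF _ F] by (simp add: o_def)
qed

lemma prod_meas:
  assumes F: "continuous_map (prod_topology X X) euclidean (F :: 'a\<times>'a \<Rightarrow> complex)"
  shows "F \<in> borel_measurable (M \<Otimes>\<^sub>M M)"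
proof -
  define Q where "Q n m c A \<longleftrightarrow> (\<forall>i<m. c i \<in> K \<and> A i \<in> sets M) \<and>
     (\<forall>h\<in>K. \<forall>k\<in>K. norm (F (h,k) - (\<Sum>i<m. indicator (A i) h * F (c i, k))) < inverse (real (Suc n)))"
    for n and m :: nat and c :: "nat \<Rightarrow> 'a" and A :: "nat \<Rightarrow> 'a set"
  have ex: "\<exists>t. Q n (fst t) (fst (snd t)) (snd (snd t))" for n
  proof -
    obtain m c A where "Q n m c A" using approx[OF F, of "inverse (real (Suc n))"] unfolding Q_def by auto
    then show ?thesis by (intro exI[of _ "(m,c,A)"]) simp
  qed
  define tt where "tt n = (SOME t. Q n (fst t) (fst (snd t)) (snd (snd t)))" for n
  define mm where "mm n = fst (tt n)" for n
  define cc where "cc n = fst (snd (tt n))" for n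
  define AA where "AA n = snd (snd (tt n))" for n
  have MA: "(\<forall>i<mm n. cc n i \<in> K \<and> AA n i \<in> sets M) \<and>
     (\<forall>h\<in>K. \<forall>k\<in>K. norm (F (h,k) - (\<Sum>i<mm n. indicator (AA n i) h * F (cc n i, k))) < inverse (real (Suc n)))" for n
    using someI_ex[OF ex[of n]] unfolding Q_def mm_def cc_def AA_def tt_def by blast
  define Fn where "Fn n p = (\<Sum>i<mm n. indicator (AA n i) (fst p) * F (cc n i, snd p))" for n p
  show ?thesis
  proof (rule borel_measurable_LIMSEQ_metric[where f=Fn])
    fix n
    show "Fn n \<in> borel_measurable (M \<Otimes>\<^sub>M M)"
      unfolding Fn_def
    proof (rule borel_measurable_sum, rule borel_measurable_times)
      fix i assume "i \<in> {..<mm n}"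
      then have i: "cc n i \<in> K" "AA n i \<in> sets M" using MA by auto
      have [measurable]: "AA n i \<in> sets M" by (rule i(2))
      have [measurable]: "(\<lambda>k. F (cc n i, k)) \<in> borel_measurable M"
        by (rule cont_meas[OF contX_section[OF F i(1)]])
      show "(\<lambda>p. indicator (AA n i) (fst p) :: complex) \<in> borel_measurable (M \<Otimes>\<^sub>M M)"
        by measurable
      show "(\<lambda>p. F (cc n i, snd p)) \<in> borel_measurable (M \<Otimes>\<^sub>M M)"
        by measurable
    qed
  next
    fix p assume "p \<in> space (M \<Otimes>\<^sub>M M)"
    then have p: "fst p \<in> K" "snd p \<in> K" using spM by (auto simp: space_pair_measure)
    show "(\<lambda>n. Fn n p) \<longlonglongrightarrow> F p"
    proof (rule LIMSEQ_I)
      fix r :: real assume "0 < r"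
      then obtain N where N: "N > 0" "inverse (real N) < r" using ex_inverse_of_nat_less by blast
      have "norm (Fn n p - F p) < r" if "n \<ge> N" for n
      proof -
        have "norm (F (fst p, snd p) - (\<Sum>i<mm n. indicator (AA n i) (fst p) * F (cc n i, snd p))) < inverse (real (Suc n))"
          using MA[of n] p by blast
        then have "norm (F p - Fn n p) < inverse (real (Suc n))" unfolding Fn_def by simp
        also have "\<dots> \<le> inverse (real N)" using that N by (simp add: field_simps)
        finally show ?thesis using N by (simp add: norm_minus_commute)
      qed
      then show "\<exists>N. \<forall>n\<ge>N. norm (Fn n p - F p) < r" by blast
    qed
  qed
qed

lemma fubini:
  assumes F: "continuous_map (prod_topology X X) euclidean (F :: 'a\<times>'a \<Rightarrow> complex)"
  shows "integrable M (\<lambda>k. \<integral>h. F (h,k) \<partial>M)" "integrable M (\<lambda>h. \<integral>k. F (h,k) \<partial>M)"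
    "(\<integral>k. (\<integral>h. F (h,k) \<partial>M) \<partial>M) = (\<integral>h. (\<integral>k. F (h,k) \<partial>M) \<partial>M)"
proof -
  interpret Mp: prob_space M by (rule prob)
  interpret P: pair_prob_space M M
    by (intro pair_prob_space.intro pair_sigma_finite.intro prob Mp.sigma_finite_measure_axioms)
  have cp: "compact_space (prod_topology X X)" using cpX by (simp add: compact_space_prod_topology)
  have "compactin euclidean (F ` topspace (prod_topology X X))"
    using image_compactin[OF _ F] cp by (simp add: compact_space_def)
  then have "bounded (F ` (K \<times> K))" using topX by (simp add: compact_imp_bounded)
  then obtain B where B: "\<forall>p\<in>K\<times>K. norm (F p) \<le> B" by (auto simp: bounded_iff)
  have int: "integrable (M \<Otimes>\<^sub>M M) (\<lambda>(h,k). F (h,k))"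
    by (rule P.integrable_const_bound[where B=B]) (use B prod_meas[OF F] spM in \<open>auto simp: space_pair_measure\<close>)
  show "integrable M (\<lambda>k. \<integral>h. F (h,k) \<partial>M)" using P.integrable_snd[OF int] .
  show "integrable M (\<lambda>h. \<integral>k. F (h,k) \<partial>M)" using P.integrable_fst[OF int] .
  show "(\<integral>k. (\<integral>h. F (h,k) \<partial>M) \<partial>M) = (\<integral>h. (\<integral>k. F (h,k) \<partial>M) \<partial>M)"
    using P.integral_snd[OF int] P.integral_fst[OF int] by simp
qed

lemma fubini2:
  assumes F: "continuous_map (prod_topology X X) euclidean (\<lambda>p. F (fst p) (snd p) :: complex)"
  shows "integrable M (\<lambda>k. \<integral>h. F h k \<partial>M)" "integrable M (\<lambda>h. \<integral>k. F h k \<partial>M)"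
    "(\<integral>k. (\<integral>h. F h k \<partial>M) \<partial>M) = (\<integral>h. (\<integral>k. F h k \<partial>M) \<partial>M)"
  using fubini[OF F] by simp_all

lemma cm_vsnd: "continuous_map X T v \<Longrightarrow> continuous_map (prod_topology X X) T (\<lambda>p. v (snd p))"
  using continuous_map_compose[OF continuous_map_snd[of X X]] by (simp add: o_def)
lemma cm_ufst: "continuous_map X T v \<Longrightarrow> continuous_map (prod_topology X X) T (\<lambda>p. v (fst p))"
  using continuous_map_compose[OF continuous_map_fst[of X X]] by (simp add: o_def)

lemma inv_c1 [simp]: "x \<in> carrier G \<Longrightarrow> y \<in> carrier G \<Longrightarrow> x \<otimes> (inv x \<otimes> y) = y"
  by (simp add: m_assoc[symmetric])
lemma inv_c2 [simp]: "x \<in> carrier G \<Longrightarrow> y \<in> carrier G \<Longrightarrow> inv x \<otimes> (x \<otimes> y) = y"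
  by (simp add: m_assoc[symmetric])

lemmas gsimps = m_assoc inv_mult_group inK

end

locale HS2 = HS +
  fixes \<mu> f :: "'a \<Rightarrow> complex"
  assumes mu: "character G \<mu>"
    and fc: "continuous_map T euclidean f"
    and f_nz: "\<exists>x\<in>carrier G. f x \<noteq> 0"
    and eq: "\<forall>x\<in>carrier G. \<forall>y\<in>carrier G.
       (\<integral>k. f (x \<otimes> k \<otimes> y \<otimes> inv k) \<partial>M)
       + \<mu> y * (\<integral>k. f (x \<otimes> k \<otimes> inv y \<otimes> inv k) \<partial>M)
       = 2 * f x * f y"
begin

abbreviation P where "P a b \<equiv> (\<integral>k. f (a \<otimes> k \<otimes> b \<otimes> inv k) \<partial>M)"

lemma eq': "x \<in> carrier G \<Longrightarrow> y \<in> carrier G \<Longrightarrow> P x y + \<mu> y * P x (inv y) = 2 * f x * f y"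
  using eq by blast

lemma mu_mult: "x \<in> carrier G \<Longrightarrow> y \<in> carrier G \<Longrightarrow> \<mu> (x \<otimes> y) = \<mu> x * \<mu> y"
  using mu unfolding character_def by blast
lemma mu_nz: "x \<in> carrier G \<Longrightarrow> \<mu> x \<noteq> 0"
  using mu unfolding character_def by blast
lemma mu_one: "\<mu> \<one> = 1"
  using mu_mult[of \<one> \<one>] mu_nz[of \<one>] by simp
lemma mu_inv: "x \<in> carrier G \<Longrightarrow> \<mu> (inv x) * \<mu> x = 1"
  using mu_mult[of "inv x" x] mu_one by simp

lemma cf: "continuous_map X T v \<Longrightarrow> continuous_map X euclidean (\<lambda>k. f (v k))"
  by (rule cm_f[OF fc])

lemma intf: "continuous_map X T v \<Longrightarrow> integrable M (\<lambda>k. f (v k))"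
  by (rule cont_int[OF cf])
lemma measf: "continuous_map X T v \<Longrightarrow> (\<lambda>k. f (v k)) \<in> borel_measurable M"
  by (rule cont_meas[OF cf])

lemma int_const: "(\<integral>k. c \<partial>M) = (c::complex)"
proof -
  interpret prob_space M by (rule prob)
  show ?thesis using prob_space by simp
qed

lemma cv: "a \<in> carrier G \<Longrightarrow> b \<in> carrier G \<Longrightarrow> continuous_map X T (\<lambda>k. a \<otimes> k \<otimes> b \<otimes> inv k)"
  by (intro cm_intros) auto

lemma f_one: "f \<one> = 1"
proof -
  obtain x0 where x0: "x0 \<in> carrier G" "f x0 \<noteq> 0" using f_nz by blast
  have "P x0 \<one> = (\<integral>k. f x0 \<partial>M)"
    by (rule Bochner_Integration.integral_cong) (use x0 in \<open>auto simp: spM gsimps\<close>)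
  then have "P x0 \<one> = f x0" by (simp only: int_const)
  then have "f x0 + f x0 = 2 * f x0 * f \<one>" using eq'[OF x0(1) one_closed] mu_one by simp
  then show ?thesis using x0(2) by (simp add: algebra_simps)
qed

lemma Pconj:
  assumes k0: "k0 \<in> K" and a: "a \<in> carrier G" and y: "y \<in> carrier G"
  shows "P a (k0 \<otimes> y \<otimes> inv k0) = P a y"
proof -
  have "P a (k0 \<otimes> y \<otimes> inv k0) = (\<integral>k. f (a \<otimes> (k \<otimes> k0) \<otimes> y \<otimes> inv (k \<otimes> k0)) \<partial>M)"
    by (rule Bochner_Integration.integral_cong) (use k0 a y in \<open>auto simp: spM gsimps\<close>)
  also have "\<dots> = P a y" by (rule int_right[OF k0 measf[OF cv[OF a y]]])
  finally show ?thesis .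
qed

lemma mu_conj: "k0 \<in> carrier G \<Longrightarrow> y \<in> carrier G \<Longrightarrow> \<mu> (k0 \<otimes> y \<otimes> inv k0) = \<mu> y"
  using mu_mult mu_inv by (simp add: mult.commute)

lemma f_conj:
  assumes k0: "k0 \<in> K" and y: "y \<in> carrier G"
  shows "f (k0 \<otimes> y \<otimes> inv k0) = f y"
proof -
  obtain x0 where x0: "x0 \<in> carrier G" "f x0 \<noteq> 0" using f_nz by blast
  have k0c: "k0 \<in> carrier G" using k0 by (rule inK)
  have i: "inv (k0 \<otimes> y \<otimes> inv k0) = k0 \<otimes> inv y \<otimes> inv k0" using k0c y by (simp add: gsimps)
  have "2 * f x0 * f (k0 \<otimes> y \<otimes> inv k0) = P x0 y + \<mu> y * P x0 (inv y)"
    using eq'[OF x0(1), of "k0 \<otimes> y \<otimes> inv k0"] k0c y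
    by (simp add: i Pconj[OF k0 x0(1)] mu_conj)
  also have "\<dots> = 2 * f x0 * f y" using eq'[OF x0(1) y] .
  finally show ?thesis using x0(2) by simp
qed

lemma Kcentral: "k \<in> K \<Longrightarrow> x \<in> carrier G \<Longrightarrow> f (k \<otimes> x) = f (x \<otimes> k)"
  using f_conj[of k "x \<otimes> k"] by (simp add: gsimps)

lemma P_one: "y \<in> carrier G \<Longrightarrow> P \<one> y = f y"
proof -
  assume y: "y \<in> carrier G"
  have "P \<one> y = (\<integral>k. f y \<partial>M)"
    by (rule Bochner_Integration.integral_cong) (use y f_conj in \<open>auto simp: spM inK\<close>)
  then show ?thesis by (simp only: int_const)
qed

lemma finv: "y \<in> carrier G \<Longrightarrow> f y = \<mu> y * f (inv y)"
  using eq'[OF one_closed, of y] by (simp add: P_one f_one)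

lemma Pinv:
  assumes x: "x \<in> carrier G" and y: "y \<in> carrier G"
  shows "P x y = \<mu> x * \<mu> y * P (inv y) (inv x)"
proof -
  have pw: "f (x \<otimes> k \<otimes> y \<otimes> inv k) = \<mu> x * \<mu> y * f (inv y \<otimes> inv k \<otimes> inv x \<otimes> inv (inv k))"
    if k: "k \<in> K" for k
  proof -
    have kc: "k \<in> carrier G" using k by (rule inK)
    have "\<mu> (x \<otimes> k \<otimes> y \<otimes> inv k) = \<mu> x * \<mu> y * (\<mu> (inv k) * \<mu> k)"
      using x y kc by (simp add: mu_mult mult_ac)
    then have m: "\<mu> (x \<otimes> k \<otimes> y \<otimes> inv k) = \<mu> x * \<mu> y" using mu_inv[OF kc] by simp
    have "inv (x \<otimes> k \<otimes> y \<otimes> inv k) = k \<otimes> (inv y \<otimes> inv k \<otimes> inv x \<otimes> k) \<otimes> inv k"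
      using x y kc by (simp add: gsimps)
    then have "f (inv (x \<otimes> k \<otimes> y \<otimes> inv k)) = f (inv y \<otimes> inv k \<otimes> inv x \<otimes> k)"
      using f_conj[OF k, of "inv y \<otimes> inv k \<otimes> inv x \<otimes> k"] x y kc by simp
    then show ?thesis using finv[of "x \<otimes> k \<otimes> y \<otimes> inv k"] m x y kc by simp
  qed
  have "P x y = (\<integral>k. \<mu> x * \<mu> y * f (inv y \<otimes> inv k \<otimes> inv x \<otimes> inv (inv k)) \<partial>M)"
    by (rule Bochner_Integration.integral_cong) (simp_all add: spM pw)
  also have "\<dots> = \<mu> x * \<mu> y * (\<integral>k. f (inv y \<otimes> inv k \<otimes> inv x \<otimes> inv (inv k)) \<partial>M)"
    by (rule integral_mult_right_zero)
  also have "(\<integral>k. f (inv y \<otimes> inv k \<otimes> inv x \<otimes> inv (inv k)) \<partial>M) = P (inv y) (inv x)"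
    by (rule int_inv[OF measf[OF cv]]) (use x y in simp_all)
  finally show ?thesis .
qed

lemma Psym:
  assumes x: "x \<in> carrier G" and y: "y \<in> carrier G"
  shows "P x y = P y x"
proof -
  have "P x (inv y) = \<mu> x * \<mu> (inv y) * P y (inv x)" using Pinv[of x "inv y"] x y by simp
  then have "\<mu> y * P x (inv y) = \<mu> x * P y (inv x)"
    using mu_inv[OF y] by (simp add: mult_ac)
  moreover have "P x y + \<mu> y * P x (inv y) = P y x + \<mu> x * P y (inv x)"
    using eq'[OF x y] eq'[OF y x] by (simp add: mult_ac)
  ultimately show ?thesis by simp
qed

lemma intPv:
  assumes a: "a \<in> carrier G" and v: "continuous_map X T v"
  shows "integrable M (\<lambda>k. P a (v k))"
proof -
  have "continuous_map (prod_topology X X) euclidean (\<lambda>p. f (a \<otimes> fst p \<otimes> v (snd p) \<otimes> inv (fst p)))"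
    by (intro cm_f[OF fc] cm_mult cm_inv cm_const cm_fst cm_vsnd v a)
  from fubini2(1)[of "\<lambda>h k. f (a \<otimes> h \<otimes> v k \<otimes> inv h)", OF this] show ?thesis .
qed

lemma intPu:
  assumes b: "b \<in> carrier G" and u: "continuous_map X T u"
  shows "integrable M (\<lambda>h. P (u h) b)"
proof -
  have "continuous_map (prod_topology X X) euclidean (\<lambda>p. f (u (fst p) \<otimes> snd p \<otimes> b \<otimes> inv (snd p)))"
    by (intro cm_f[OF fc] cm_mult cm_inv cm_const cm_snd cm_ufst u b)
  from fubini2(2)[of "\<lambda>h k. f (u h \<otimes> k \<otimes> b \<otimes> inv k)", OF this] show ?thesis .
qed

lemma swapA:
  assumes a: "a \<in> carrier G" and y: "y \<in> carrier G" and z: "z \<in> carrier G"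
  shows "(\<integral>k. P a (y \<otimes> k \<otimes> z \<otimes> inv k) \<partial>M) = (\<integral>h. P (a \<otimes> h \<otimes> y \<otimes> inv h) z \<partial>M)"
proof -
  have "continuous_map (prod_topology X X) euclidean (\<lambda>p. f (a \<otimes> fst p \<otimes> (y \<otimes> snd p \<otimes> z \<otimes> inv (snd p)) \<otimes> inv (fst p)))"
    by (intro cm_f[OF fc] cm_mult cm_inv cm_const cm_fst cm_snd a y z)
  from fubini2(3)[of "\<lambda>h k. f (a \<otimes> h \<otimes> (y \<otimes> k \<otimes> z \<otimes> inv k) \<otimes> inv h)", OF this]
  have "(\<integral>k. P a (y \<otimes> k \<otimes> z \<otimes> inv k) \<partial>M) =
     (\<integral>h. (\<integral>k. f (a \<otimes> h \<otimes> (y \<otimes> k \<otimes> z \<otimes> inv k) \<otimes> inv h) \<partial>M) \<partial>M)" .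
  also have "\<dots> = (\<integral>h. P (a \<otimes> h \<otimes> y \<otimes> inv h) z \<partial>M)"
  proof (rule Bochner_Integration.integral_cong[OF refl])
    fix h assume "h \<in> space M"
    then have h: "h \<in> K" using spM by simp
    then have hc: "h \<in> carrier G" by (rule inK)
    have "(\<integral>k. f (a \<otimes> h \<otimes> (y \<otimes> k \<otimes> z \<otimes> inv k) \<otimes> inv h) \<partial>M)
        = (\<integral>k. f (a \<otimes> h \<otimes> y \<otimes> inv h \<otimes> (h \<otimes> k) \<otimes> z \<otimes> inv (h \<otimes> k)) \<partial>M)"
      by (rule Bochner_Integration.integral_cong) (use a y z hc in \<open>auto simp: spM gsimps\<close>)
    also have "\<dots> = P (a \<otimes> h \<otimes> y \<otimes> inv h) z"
      by (rule int_left[OF h measf[OF cv]]) (use a y z hc in simp_all)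
    finally show "(\<integral>k. f (a \<otimes> h \<otimes> (y \<otimes> k \<otimes> z \<otimes> inv k) \<otimes> inv h) \<partial>M) = P (a \<otimes> h \<otimes> y \<otimes> inv h) z" .
  qed
  finally show ?thesis .
qed

lemma cv2: "a \<in> carrier G \<Longrightarrow> b \<in> carrier G \<Longrightarrow> continuous_map X T (\<lambda>k. k \<otimes> a \<otimes> inv k \<otimes> b)"
  by (intro cm_intros) auto

lemma swapB:
  assumes a: "a \<in> carrier G" and z: "z \<in> carrier G" and w: "w \<in> carrier G"
  shows "(\<integral>k. P a (k \<otimes> z \<otimes> inv k \<otimes> w) \<partial>M) = (\<integral>k. P a (z \<otimes> k \<otimes> w \<otimes> inv k) \<partial>M)"
proof -
  have "(\<integral>k. P a (k \<otimes> z \<otimes> inv k \<otimes> w) \<partial>M) = (\<integral>k. P a (z \<otimes> inv k \<otimes> w \<otimes> inv (inv k)) \<partial>M)"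
  proof (rule Bochner_Integration.integral_cong[OF refl])
    fix k assume "k \<in> space M"
    then have k: "k \<in> K" using spM by simp
    then have kc: "k \<in> carrier G" by (rule inK)
    have "k \<otimes> z \<otimes> inv k \<otimes> w = k \<otimes> (z \<otimes> inv k \<otimes> w \<otimes> k) \<otimes> inv k"
      using z w kc by (simp add: gsimps)
    then show "P a (k \<otimes> z \<otimes> inv k \<otimes> w) = P a (z \<otimes> inv k \<otimes> w \<otimes> inv (inv k))"
      using Pconj[OF k a, of "z \<otimes> inv k \<otimes> w \<otimes> k"] z w kc by simp
  qed
  also have "\<dots> = (\<integral>k. P a (z \<otimes> k \<otimes> w \<otimes> inv k) \<partial>M)"
    by (rule int_inv[OF borel_measurable_integrable[OF intPv[OF a cv[OF z w]]]])
  finally show ?thesis .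
qed

lemma expand1:
  assumes a: "a \<in> carrier G" and y: "y \<in> carrier G" and b: "b \<in> carrier G"
  shows "2 * P a y * f b = (\<integral>h. P (a \<otimes> h \<otimes> y \<otimes> inv h) b \<partial>M) + \<mu> b * (\<integral>h. P (a \<otimes> h \<otimes> y \<otimes> inv h) (inv b) \<partial>M)"
proof -
  have "2 * P a y * f b = (\<integral>h. f (a \<otimes> h \<otimes> y \<otimes> inv h) * (2 * f b) \<partial>M)"
    by (simp add: integral_mult_left_zero mult_ac)
  also have "\<dots> = (\<integral>h. P (a \<otimes> h \<otimes> y \<otimes> inv h) b + \<mu> b * P (a \<otimes> h \<otimes> y \<otimes> inv h) (inv b) \<partial>M)"
  proof (rule Bochner_Integration.integral_cong[OF refl])
    fix h assume "h \<in> space M"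
    then have hc: "h \<in> carrier G" using spM inK by simp
    show "f (a \<otimes> h \<otimes> y \<otimes> inv h) * (2 * f b) = P (a \<otimes> h \<otimes> y \<otimes> inv h) b + \<mu> b * P (a \<otimes> h \<otimes> y \<otimes> inv h) (inv b)"
      using eq'[of "a \<otimes> h \<otimes> y \<otimes> inv h" b] a y b hc by (simp add: mult_ac)
  qed
  also have "\<dots> = (\<integral>h. P (a \<otimes> h \<otimes> y \<otimes> inv h) b \<partial>M) + (\<integral>h. \<mu> b * P (a \<otimes> h \<otimes> y \<otimes> inv h) (inv b) \<partial>M)"
    by (rule Bochner_Integration.integral_add) (use a y b intPu[OF _ cv[OF a y]] in auto)
  finally show ?thesis by (simp only: integral_mult_right_zero)
qed

lemma expand2:
  assumes a: "a \<in> carrier G" and y: "y \<in> carrier G" and b: "b \<in> carrier G"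
  shows "2 * f a * P y b = (\<integral>k. P a (y \<otimes> k \<otimes> b \<otimes> inv k) \<partial>M) + \<mu> y * \<mu> b * (\<integral>k. P a (k \<otimes> inv b \<otimes> inv k \<otimes> inv y) \<partial>M)"
proof -
  have "2 * f a * P y b = (\<integral>k. 2 * f a * f (y \<otimes> k \<otimes> b \<otimes> inv k) \<partial>M)"
    by (simp add: integral_mult_right_zero)
  also have "\<dots> = (\<integral>k. P a (y \<otimes> k \<otimes> b \<otimes> inv k) + \<mu> y * \<mu> b * P a (k \<otimes> inv b \<otimes> inv k \<otimes> inv y) \<partial>M)"
  proof (rule Bochner_Integration.integral_cong[OF refl])
    fix k assume "k \<in> space M"
    then have kc: "k \<in> carrier G" using spM inK by simp
    have "\<mu> (y \<otimes> k \<otimes> b \<otimes> inv k) = \<mu> y * \<mu> b * (\<mu> (inv k) * \<mu> k)"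
      using b y kc by (simp add: mu_mult mult_ac)
    then have m: "\<mu> (y \<otimes> k \<otimes> b \<otimes> inv k) = \<mu> y * \<mu> b" using mu_inv[OF kc] by simp
    have i: "inv (y \<otimes> k \<otimes> b \<otimes> inv k) = k \<otimes> inv b \<otimes> inv k \<otimes> inv y"
      using b y kc by (simp add: gsimps)
    show "2 * f a * f (y \<otimes> k \<otimes> b \<otimes> inv k) = P a (y \<otimes> k \<otimes> b \<otimes> inv k) + \<mu> y * \<mu> b * P a (k \<otimes> inv b \<otimes> inv k \<otimes> inv y)"
      using eq'[of a "y \<otimes> k \<otimes> b \<otimes> inv k"] a y b kc by (simp add: m i)
  qed
  also have "\<dots> = (\<integral>k. P a (y \<otimes> k \<otimes> b \<otimes> inv k) \<partial>M) + (\<integral>k. \<mu> y * \<mu> b * P a (k \<otimes> inv b \<otimes> inv k \<otimes> inv y) \<partial>M)"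
    by (rule Bochner_Integration.integral_add) (use a y b intPv[OF a cv[OF y b]] intPv[OF a cv2[of "inv b" "inv y"]] in auto)
  finally show ?thesis by (simp only: integral_mult_right_zero)
qed

lemma part5:
  assumes x: "x \<in> carrier G" and y: "y \<in> carrier G" and z: "z \<in> carrier G"
  defines "fx \<equiv> (\<lambda>w. P x w - f x * f w)"
  shows "(\<integral>k. fx (y \<otimes> k \<otimes> z \<otimes> inv k) \<partial>M) + (\<integral>k. fx (z \<otimes> k \<otimes> y \<otimes> inv k) \<partial>M)
     = 2 * fx y * f z + 2 * fx z * f y"
proof -
  define A1 where "A1 = (\<integral>k. P x (y \<otimes> k \<otimes> z \<otimes> inv k) \<partial>M)"
  define A2 where "A2 = (\<integral>k. P x (z \<otimes> k \<otimes> y \<otimes> inv k) \<partial>M)"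
  define D1 where "D1 = (\<integral>k. P x (y \<otimes> k \<otimes> inv z \<otimes> inv k) \<partial>M)"
  define D2 where "D2 = (\<integral>k. P x (z \<otimes> k \<otimes> inv y \<otimes> inv k) \<partial>M)"
  have L: "(\<integral>k. fx (a \<otimes> k \<otimes> b \<otimes> inv k) \<partial>M) = (\<integral>k. P x (a \<otimes> k \<otimes> b \<otimes> inv k) \<partial>M) - f x * P a b"
    if a: "a \<in> carrier G" and b: "b \<in> carrier G" for a b
  proof -
    have "(\<integral>k. fx (a \<otimes> k \<otimes> b \<otimes> inv k) \<partial>M) = (\<integral>k. P x (a \<otimes> k \<otimes> b \<otimes> inv k) \<partial>M) - (\<integral>k. f x * f (a \<otimes> k \<otimes> b \<otimes> inv k) \<partial>M)"
      unfolding fx_def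
      by (rule Bochner_Integration.integral_diff) (use intPv[OF x cv[OF a b]] intf[OF cv[OF a b]] in auto)
    then show ?thesis by (simp only: integral_mult_right_zero)
  qed
  have E1: "2 * P x y * f z = A1 + \<mu> z * D1"
    using expand1[OF x y z] swapA[OF x y z] swapA[OF x y inv_closed[OF z]] unfolding A1_def D1_def by simp
  have E2: "2 * P x z * f y = A2 + \<mu> y * D2"
    using expand1[OF x z y] swapA[OF x z y] swapA[OF x z inv_closed[OF y]] unfolding A2_def D2_def by simp
  have E3: "2 * f x * P y (inv z) = D1 + \<mu> y * \<mu> (inv z) * D2"
    using expand2[OF x y inv_closed[OF z]] swapB[OF x z inv_closed[OF y]] z unfolding D1_def D2_def by simp
  have E4: "2 * f y * f z = P y z + \<mu> z * P y (inv z)" using eq'[OF y z] by simp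
  have S: "P z y = P y z" using Psym[OF z y] .
  have "4 * f x * f y * f z = 2 * f x * (2 * f y * f z)" by simp
  also have "\<dots> = 2 * f x * P y z + \<mu> z * (2 * f x * P y (inv z))" using E4 by (simp add: algebra_simps)
  also have "\<dots> = 2 * f x * P y z + \<mu> z * D1 + (\<mu> (inv z) * \<mu> z) * \<mu> y * D2" using E3 by (simp add: algebra_simps)
  also have "\<dots> = 2 * f x * P y z + \<mu> z * D1 + \<mu> y * D2" using mu_inv[OF z] by simp
  finally have F: "4 * f x * f y * f z = 2 * f x * P y z + \<mu> z * D1 + \<mu> y * D2" .
  have "(\<integral>k. fx (y \<otimes> k \<otimes> z \<otimes> inv k) \<partial>M) + (\<integral>k. fx (z \<otimes> k \<otimes> y \<otimes> inv k) \<partial>M)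
      = A1 - f x * P y z + (A2 - f x * P y z)"
    using L[OF y z] L[OF z y] S unfolding A1_def A2_def by simp
  also have "\<dots> = 2 * fx y * f z + 2 * fx z * f y"
    unfolding fx_def using E1 E2 F by (simp add: algebra_simps)
  finally show ?thesis .
qed

end

theorem proposition3p3:
  fixes G :: "('a, 'b) monoid_scheme" and T :: "'a topology" and K :: "'a set"
    and M :: "'a measure" and \<mu> f :: "'a \<Rightarrow> complex"
  assumes G: "locally_compact_group G T"
    and K: "subgroup K G" "compactin T K"
    and M: "normalized_haar G T K M"
    and mu: "character G \<mu>" "continuous_map T euclidean \<mu>"
    and f_cont: "continuous_map T euclidean f"
    and f_nz: "\<exists>x\<in>carrier G. f x \<noteq> 0"
    and eq: "\<forall>x\<in>carrier G. \<forall>y\<in>carrier G.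
       (\<integral>k. f (x \<otimes>\<^bsub>G\<^esub> k \<otimes>\<^bsub>G\<^esub> y \<otimes>\<^bsub>G\<^esub> inv\<^bsub>G\<^esub> k) \<partial>M)
       + \<mu> y * (\<integral>k. f (x \<otimes>\<^bsub>G\<^esub> k \<otimes>\<^bsub>G\<^esub> inv\<^bsub>G\<^esub> y \<otimes>\<^bsub>G\<^esub> inv\<^bsub>G\<^esub> k) \<partial>M)
       = 2 * f x * f y"
  shows "f \<one>\<^bsub>G\<^esub> = 1 \<and> K_central G K f
    \<and> (\<forall>x\<in>carrier G. f x = \<mu> x * f (inv\<^bsub>G\<^esub> x))
    \<and> (\<forall>x\<in>carrier G. \<forall>y\<in>carrier G.
           (\<integral>k. f (x \<otimes>\<^bsub>G\<^esub> k \<otimes>\<^bsub>G\<^esub> y \<otimes>\<^bsub>G\<^esub> inv\<^bsub>G\<^esub> k) \<partial>M)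
         = (\<integral>k. f (y \<otimes>\<^bsub>G\<^esub> k \<otimes>\<^bsub>G\<^esub> x \<otimes>\<^bsub>G\<^esub> inv\<^bsub>G\<^esub> k) \<partial>M))
    \<and> (\<forall>x\<in>carrier G.
           (let fx = (\<lambda>y. (\<integral>k. f (x \<otimes>\<^bsub>G\<^esub> k \<otimes>\<^bsub>G\<^esub> y \<otimes>\<^bsub>G\<^esub> inv\<^bsub>G\<^esub> k) \<partial>M) - f x * f y)
            in \<forall>y\<in>carrier G. \<forall>z\<in>carrier G.
                 (\<integral>k. fx (y \<otimes>\<^bsub>G\<^esub> k \<otimes>\<^bsub>G\<^esub> z \<otimes>\<^bsub>G\<^esub> inv\<^bsub>G\<^esub> k) \<partial>M)
               + (\<integral>k. fx (z \<otimes>\<^bsub>G\<^esub> k \<otimes>\<^bsub>G\<^esub> y \<otimes>\<^bsub>G\<^esub> inv\<^bsub>G\<^esub> k) \<partial>M)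
               = 2 * fx y * f z + 2 * fx z * f y))"
proof -
  have g1: "group G" using G unfolding locally_compact_group_def topological_group_def by (elim conjE)
  have g2: "topspace T = carrier G" using G unfolding locally_compact_group_def topological_group_def by (elim conjE)
  have g3: "continuous_map (prod_topology T T) T (\<lambda>p. fst p \<otimes>\<^bsub>G\<^esub> snd p)"
    using G unfolding locally_compact_group_def topological_group_def by (elim conjE)
  have g4: "continuous_map T T (\<lambda>x. inv\<^bsub>G\<^esub> x)"
    using G unfolding locally_compact_group_def topological_group_def by (elim conjE)
  interpret H: HS2 G T K M \<mu> f
    by (intro HS2.intro HS.intro HS_axioms.intro HS2_axioms.intro g1 g2 g3 g4 K M mu(1) f_cont f_nz eq)
  show ?thesis
  proof (intro conjI)
    show "f \<one>\<^bsub>G\<^esub> = 1" by (rule H.f_one)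
    show "K_central G K f" unfolding K_central_def using H.Kcentral by blast
    show "\<forall>x\<in>carrier G. f x = \<mu> x * f (inv\<^bsub>G\<^esub> x)" using H.finv by blast
    show "\<forall>x\<in>carrier G. \<forall>y\<in>carrier G.
           (\<integral>k. f (x \<otimes>\<^bsub>G\<^esub> k \<otimes>\<^bsub>G\<^esub> y \<otimes>\<^bsub>G\<^esub> inv\<^bsub>G\<^esub> k) \<partial>M)
         = (\<integral>k. f (y \<otimes>\<^bsub>G\<^esub> k \<otimes>\<^bsub>G\<^esub> x \<otimes>\<^bsub>G\<^esub> inv\<^bsub>G\<^esub> k) \<partial>M)"
      using H.Psym by blast
    show "\<forall>x\<in>carrier G.
           (let fx = (\<lambda>y. (\<integral>k. f (x \<otimes>\<^bsub>G\<^esub> k \<otimes>\<^bsub>G\<^esub> y \<otimes>\<^bsub>G\<^esub> inv\<^bsub>G\<^esub> k) \<partial>M) - f x * f y)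
            in \<forall>y\<in>carrier G. \<forall>z\<in>carrier G.
                 (\<integral>k. fx (y \<otimes>\<^bsub>G\<^esub> k \<otimes>\<^bsub>G\<^esub> z \<otimes>\<^bsub>G\<^esub> inv\<^bsub>G\<^esub> k) \<partial>M)
               + (\<integral>k. fx (z \<otimes>\<^bsub>G\<^esub> k \<otimes>\<^bsub>G\<^esub> y \<otimes>\<^bsub>G\<^esub> inv\<^bsub>G\<^esub> k) \<partial>M)
               = 2 * fx y * f z + 2 * fx z * f y)"
      unfolding Let_def using H.part5 by blast
  qed
qed

end
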